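(* Let $\mathcal{K}$ be a Fraïssé class in a finite relational language $\mathcal{L}$, let $\mathbf{K}=\mathrm{Flim}(\mathcal{K})$ have finite big Ramsey degrees, and let $\mathbf{K}^*$ and $\mathbf{K}'$ be recurrent big Ramsey structures for $\mathbf{K}$ in finite relational languages $\mathcal{L}^*\supseteq\mathcal{L}$ and $\mathcal{L}'\supseteq\mathcal{L}$ respectively. Then each of $\mathbf{K}^*$, $\mathbf{K}'$ is bi-interpretable with a substructure of the other.
   Context: For structures $\mathbf{A},\mathbf{B}$, $\mathrm{Emb}(\mathbf{A},\mathbf{B})$ is the set of embeddings. For $\mathbf{A}\in\mathcal{K}$, the big Ramsey degree $\mathrm{BRD}(\mathbf{A},\mathbf{K})$ is the least $t$ (if it exists) such that for every $r>t$ and every coloring $\chi:\mathrm{Emb}(\mathbf{A},\mathbf{K})\to r$ there is $g\in\mathrm{Emb}(\mathbf{K},\mathbf{K})$ with $|\chi[g\circ\mathrm{Emb}(\mathbf{A},\mathbf{K})]|\le t$. For $\mathcal{L}^*\supseteq\mathcal{L}$ and an $\mathcal{L}^*$-expansion $\mathbf{M}^*$ of $\mathbf{M}$ (same underlying set, $\mathcal{L}$-reduct equal to $\mathbf{M}$), $\mathbf{M}^*(\mathbf{B})$ denotes the set of $\mathcal{L}^*$-expansions of the finite structure $\mathbf{B}$ embeddable in $\mathbf{M}^*$, and for $f\in\mathrm{Emb}(\mathbf{B},\mathbf{M})$, $\mathbf{M}^*\cdot f$ is the unique $\mathbf{B}^*\in\mathbf{M}^*(\mathbf{B})$ with $f\in\mathrm{Emb}(\mathbf{B}^*,\mathbf{M}^*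 )$. A big Ramsey structure for $\mathbf{K}$ is an expansion $\mathbf{K}^*$ such that for every $\mathbf{A}\in\mathcal{K}$, $|\mathbf{K}^*(\mathbf{A})|=\mathrm{BRD}(\mathbf{A},\mathbf{K})$ and for every $g\in\mathrm{Emb}(\mathbf{K},\mathbf{K})$ the coloring $f\mapsto\mathbf{K}^*\cdot f$ takes all $|\mathbf{K}^*(\mathbf{A})|$ values on $g\circ\mathrm{Emb}(\mathbf{A},\mathbf{K})$. It is recurrent if $\mathrm{Emb}(\mathbf{K}^*,\mathbf{K}^*\cdot\eta)\ne\emptyset$ for every $\eta\in\mathrm{Emb}(\mathbf{K},\mathbf{K})$, where $\mathbf{K}^*\cdot\eta$ is the expansion of $\mathbf{K}$ pulled back along $\eta$. *)

theory Defs
  imports "HOL-Library.FuncSet" "HOL-Library.Countable_Set"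
begin

text \<open>A language is a set of relation symbols of type 'r together with a (global)
arity function ar. A structure has a universe and an interpretation of relations
on lists of elements.\<close>

record ('r, 'a) struc =
  univ :: "'a set"
  rel  :: "'r \<Rightarrow> 'a list \<Rightarrow> bool"

definition is_struc :: "('r \<Rightarrow> nat) \<Rightarrow> 'r set \<Rightarrow> ('r, 'a) struc \<Rightarrow> bool" where
  "is_struc ar L M \<longleftrightarrow>
     (\<forall>R xs. rel M R xs \<longrightarrow> R \<in> L \<and> length xs = ar R \<and> set xs \<subseteq> univ M)"

text \<open>Embeddings (extensional, so that sets of embeddings are honest sets).\<close>
definition emb :: "('r \<Rightarrow> nat) \<Rightarrow> 'r set \<Rightarrow> ('r, 'a) struc \<Rightarrow> ('r, 'b) struc \<Rightarrow> ('a \<Rightarrow> 'b) set" where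
  "emb ar L A B = {f. f \<in> extensional (univ A) \<and> f ` univ A \<subseteq> univ B \<and> inj_on f (univ A) \<and>
      (\<forall>R\<in>L. \<forall>xs. length xs = ar R \<and> set xs \<subseteq> univ A \<longrightarrow> (rel A R xs \<longleftrightarrow> rel B R (map f xs)))}"

definition reduct :: "'r set \<Rightarrow> ('r, 'a) struc \<Rightarrow> ('r, 'a) struc" where
  "reduct L M = M\<lparr>rel := (\<lambda>R xs. R \<in> L \<and> rel M R xs)\<rparr>"

definition is_expansion :: "('r \<Rightarrow> nat) \<Rightarrow> 'r set \<Rightarrow> 'r set \<Rightarrow> ('r, 'a) struc \<Rightarrow> ('r, 'a) struc \<Rightarrow> bool" where
  "is_expansion ar L Ls M Ms \<longleftrightarrow> L \<subseteq> Ls \<and> is_struc ar Ls Ms \<and> univ Ms = univ M \<and> reduct L Ms = M"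

definition isomorphic :: "('r \<Rightarrow> nat) \<Rightarrow> 'r set \<Rightarrow> ('r, 'a) struc \<Rightarrow> ('r, 'b) struc \<Rightarrow> bool" where
  "isomorphic ar L A B \<longleftrightarrow> (\<exists>f\<in>emb ar L A B. f ` univ A = univ B)"

definition age :: "('r \<Rightarrow> nat) \<Rightarrow> 'r set \<Rightarrow> ('r, 'a) struc \<Rightarrow> ('r, 'a) struc set" where
  "age ar L K = {A. is_struc ar L A \<and> finite (univ A) \<and> emb ar L A K \<noteq> {}}"

definition fraisse_class :: "('r \<Rightarrow> nat) \<Rightarrow> 'r set \<Rightarrow> ('r, 'a) struc set \<Rightarrow> bool" where
  "fraisse_class ar L C \<longleftrightarrow>
     (\<forall>A\<in>C. is_struc ar L A \<and> finite (univ A)) \<and>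
     (\<forall>A\<in>C. \<forall>B. is_struc ar L B \<and> isomorphic ar L A B \<longrightarrow> B \<in> C) \<and>
     (\<forall>A\<in>C. \<forall>B. is_struc ar L B \<and> finite (univ B) \<and> emb ar L B A \<noteq> {} \<longrightarrow> B \<in> C) \<and>
     (\<forall>A\<in>C. \<forall>B\<in>C. \<exists>D\<in>C. emb ar L A D \<noteq> {} \<and> emb ar L B D \<noteq> {}) \<and>
     (\<forall>A\<in>C. \<forall>B\<in>C. \<forall>D\<in>C. \<forall>f\<in>emb ar L A B. \<forall>g\<in>emb ar L A D.
        \<exists>E\<in>C. \<exists>f'\<in>emb ar L B E. \<exists>g'\<in>emb ar L D E. \<forall>x\<in>univ A. f' (f x) = g' (g x)) \<and>
     (\<exists>S\<subseteq>C. countable S \<and> (\<forall>A\<in>C. \<exists>B\<in>S. isomorphic ar L A B)) \<and>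
     (\<forall>n. \<exists>A\<in>C. n \<le> card (univ A))"

definition ultrahomogeneous :: "('r \<Rightarrow> nat) \<Rightarrow> 'r set \<Rightarrow> ('r, 'a) struc \<Rightarrow> bool" where
  "ultrahomogeneous ar L K \<longleftrightarrow>
     (\<forall>A\<in>age ar L K. \<forall>f\<in>emb ar L A K. \<forall>g\<in>emb ar L A K.
        \<exists>h\<in>emb ar L K K. h ` univ K = univ K \<and> (\<forall>x\<in>univ A. h (f x) = g x))"

definition is_flim :: "('r \<Rightarrow> nat) \<Rightarrow> 'r set \<Rightarrow> ('r, 'a) struc set \<Rightarrow> ('r, 'a) struc \<Rightarrow> bool" where
  "is_flim ar L C K \<longleftrightarrow> is_struc ar L K \<and> countable (univ K) \<and> ultrahomogeneous ar L K \<and> age ar L K = C"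

definition brd_witness :: "('r \<Rightarrow> nat) \<Rightarrow> 'r set \<Rightarrow> ('r, 'a) struc \<Rightarrow> ('r, 'b) struc \<Rightarrow> nat \<Rightarrow> bool" where
  "brd_witness ar L A K t \<longleftrightarrow>
     (\<forall>r>t. \<forall>\<chi> \<in> emb ar L A K \<rightarrow> {..<r}.
        \<exists>g\<in>emb ar L K K. card (\<chi> ` ((\<lambda>f. compose (univ A) g f) ` emb ar L A K)) \<le> t)"

definition BRD :: "('r \<Rightarrow> nat) \<Rightarrow> 'r set \<Rightarrow> ('r, 'a) struc \<Rightarrow> ('r, 'b) struc \<Rightarrow> nat" where
  "BRD ar L A K = (LEAST t. brd_witness ar L A K t)"

definition finite_BRDs :: "('r \<Rightarrow> nat) \<Rightarrow> 'r set \<Rightarrow> ('r, 'a) struc set \<Rightarrow> ('r, 'b) struc \<Rightarrow> bool" where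
  "finite_BRDs ar L C K \<longleftrightarrow> (\<forall>A\<in>C. \<exists>t. brd_witness ar L A K t)"

definition exp_age :: "('r \<Rightarrow> nat) \<Rightarrow> 'r set \<Rightarrow> 'r set \<Rightarrow> ('r, 'b) struc \<Rightarrow> ('r, 'a) struc \<Rightarrow> ('r, 'a) struc set" where
  "exp_age ar L Ls Ms B = {Bs. is_expansion ar L Ls B Bs \<and> emb ar Ls Bs Ms \<noteq> {}}"

text \<open>M*\<cdot>f for f \<in> Emb(B, M): the unique Bs in M*(B) with f \<in> Emb(Bs, M*).\<close>
definition dot :: "('r \<Rightarrow> nat) \<Rightarrow> 'r set \<Rightarrow> 'r set \<Rightarrow> ('r, 'b) struc \<Rightarrow> ('r, 'a) struc \<Rightarrow> ('a \<Rightarrow> 'b) \<Rightarrow> ('r, 'a) struc" where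
  "dot ar L Ls Ms B f = (THE Bs. Bs \<in> exp_age ar L Ls Ms B \<and> f \<in> emb ar Ls Bs Ms)"

definition big_ramsey_structure ::
  "('r \<Rightarrow> nat) \<Rightarrow> 'r set \<Rightarrow> 'r set \<Rightarrow> ('r, 'a) struc set \<Rightarrow> ('r, 'b) struc \<Rightarrow> ('r, 'b) struc \<Rightarrow> bool" where
  "big_ramsey_structure ar L Ls C K Ks \<longleftrightarrow>
     is_expansion ar L Ls K Ks \<and>
     (\<forall>A\<in>C. card (exp_age ar L Ls Ks A) = BRD ar L A K \<and>
        (\<forall>g\<in>emb ar L K K.
           card ((\<lambda>f. dot ar L Ls Ks A f) ` ((\<lambda>f. compose (univ A) g f) ` emb ar L A K))
             = card (exp_age ar L Ls Ks A)))"

definition pull :: "('r \<Rightarrow> nat) \<Rightarrow> 'r set \<Rightarrow> ('r, 'a) struc \<Rightarrow> ('a \<Rightarrow> 'a) \<Rightarrow> ('r, 'a) struc" where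
  "pull ar Ls Ms \<eta> = \<lparr>univ = univ Ms,
     rel = (\<lambda>R xs. R \<in> Ls \<and> length xs = ar R \<and> set xs \<subseteq> univ Ms \<and> rel Ms R (map \<eta> xs))\<rparr>"

definition recurrent :: "('r \<Rightarrow> nat) \<Rightarrow> 'r set \<Rightarrow> 'r set \<Rightarrow> ('r, 'a) struc \<Rightarrow> ('r, 'a) struc \<Rightarrow> bool" where
  "recurrent ar L Ls K Ks \<longleftrightarrow> (\<forall>\<eta>\<in>emb ar L K K. emb ar Ls Ks (pull ar Ls Ks \<eta>) \<noteq> {})"

datatype 'r qf = QTrue | QAtom 'r "nat list" | QEq nat nat | QNot "'r qf" | QAnd "'r qf" "'r qf"

fun sat :: "('r, 'a) struc \<Rightarrow> 'r qf \<Rightarrow> (nat \<Rightarrow> 'a) \<Rightarrow> bool" where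
  "sat M QTrue v = True"
| "sat M (QAtom R is) v = rel M R (map v is)"
| "sat M (QEq i j) v = (v i = v j)"
| "sat M (QNot \<phi>) v = (\<not> sat M \<phi> v)"
| "sat M (QAnd \<phi> \<psi>) v = (sat M \<phi> v \<and> sat M \<psi> v)"

fun wf_qf :: "('r \<Rightarrow> nat) \<Rightarrow> 'r set \<Rightarrow> nat \<Rightarrow> 'r qf \<Rightarrow> bool" where
  "wf_qf ar L n QTrue = True"
| "wf_qf ar L n (QAtom R is) = (R \<in> L \<and> length is = ar R \<and> (\<forall>i\<in>set is. i < n))"
| "wf_qf ar L n (QEq i j) = (i < n \<and> j < n)"
| "wf_qf ar L n (QNot \<phi>) = wf_qf ar L n \<phi>"
| "wf_qf ar L n (QAnd \<phi> \<psi>) = (wf_qf ar L n \<phi> \<and> wf_qf ar L n \<psi>)"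

definition qf_interprets :: "('r \<Rightarrow> nat) \<Rightarrow> 'r set \<Rightarrow> ('r, 'a) struc \<Rightarrow> 'r set \<Rightarrow> ('r, 'a) struc \<Rightarrow> bool" where
  "qf_interprets ar L1 M1 L2 M2 \<longleftrightarrow>
     (\<forall>R\<in>L2. \<exists>\<phi>. wf_qf ar L1 (ar R) \<phi> \<and>
        (\<forall>xs. length xs = ar R \<and> set xs \<subseteq> univ M2 \<longrightarrow> (rel M2 R xs \<longleftrightarrow> sat M1 \<phi> (\<lambda>i. xs ! i))))"

definition bi_interpretable :: "('r \<Rightarrow> nat) \<Rightarrow> 'r set \<Rightarrow> ('r, 'a) struc \<Rightarrow> 'r set \<Rightarrow> ('r, 'a) struc \<Rightarrow> bool" where
  "bi_interpretable ar L1 M1 L2 M2 \<longleftrightarrow>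
     univ M1 = univ M2 \<and> qf_interprets ar L1 M1 L2 M2 \<and> qf_interprets ar L2 M2 L1 M1"

end

theory Submission
  imports Defs
begin

lemma emb_D:
  assumes "f \<in> emb ar L A B"
  shows "f \<in> extensional (univ A)" "f ` univ A \<subseteq> univ B" "inj_on f (univ A)"
    "\<And>R xs. R \<in> L \<Longrightarrow> length xs = ar R \<Longrightarrow> set xs \<subseteq> univ A \<Longrightarrow> rel A R xs \<longleftrightarrow> rel B R (map f xs)"
  using assms unfolding emb_def by auto

lemma map_compose: "set xs \<subseteq> U \<Longrightarrow> map (compose U g f) xs = map g (map f xs)"
  by (auto simp: compose_def)

lemma emb_compose:
  assumes f: "f \<in> emb ar L A B" and g: "g \<in> emb ar L B D"
  shows "compose (univ A) g f \<in> emb ar L A D"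
proof -
  note F = emb_D[OF f] and G = emb_D[OF g]
  have i: "inj_on (compose (univ A) g f) (univ A)"
  proof (rule inj_onI)
    fix x y assume xy: "x \<in> univ A" "y \<in> univ A" "compose (univ A) g f x = compose (univ A) g f y"
    then have "g (f x) = g (f y)" by (simp add: compose_def)
    then have "f x = f y" using G(3) F(2) xy(1,2) by (auto dest: inj_onD)
    then show "x = y" using F(3) xy(1,2) by (auto dest: inj_onD)
  qed
  show ?thesis
    unfolding emb_def
  proof (intro CollectI conjI ballI allI impI)
    show "compose (univ A) g f \<in> extensional (univ A)" by (simp add: compose_def)
    show "compose (univ A) g f ` univ A \<subseteq> univ D" using F(2) G(2) by (auto simp: compose_def)
    show "inj_on (compose (univ A) g f) (univ A)" by (rule i)
    fix R xs assume R: "R \<in> L" and xs: "length xs = ar R \<and> set xs \<subseteq> univ A"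
    have "set (map f xs) \<subseteq> univ B" using xs F(2) by auto
    then show "rel A R xs = rel D R (map (compose (univ A) g f) xs)"
      using F(4)[OF R] G(4)[OF R] xs by (simp add: map_compose)
  qed
qed

lemma emb_id: "restrict id (univ A) \<in> emb ar L A A"
proof -
  have m: "map (restrict id (univ A)) xs = xs" if "set xs \<subseteq> univ A" for xs
    using that by (induction xs) auto
  show ?thesis unfolding emb_def using m by (auto simp: inj_on_def)
qed

fun qconj :: "'r qf list \<Rightarrow> 'r qf" where
  "qconj [] = QTrue" | "qconj (a # as) = QAnd a (qconj as)"
fun qdisj :: "'r qf list \<Rightarrow> 'r qf" where
  "qdisj [] = QNot QTrue" | "qdisj (a # as) = QNot (QAnd (QNot a) (QNot (qdisj as)))"

lemma sat_qconj: "sat M (qconj l) v \<longleftrightarrow> (\<forall>a\<in>set l. sat M a v)" by (induction l) auto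
lemma sat_qdisj: "sat M (qdisj l) v \<longleftrightarrow> (\<exists>a\<in>set l. sat M a v)" by (induction l) auto
lemma wf_qconj: "wf_qf ar Lx n (qconj l) \<longleftrightarrow> (\<forall>a\<in>set l. wf_qf ar Lx n a)" by (induction l) auto
lemma wf_qdisj: "wf_qf ar Lx n (qdisj l) \<longleftrightarrow> (\<forall>a\<in>set l. wf_qf ar Lx n a)" by (induction l) auto

definition atomsf :: "('r \<Rightarrow> nat) \<Rightarrow> 'r set \<Rightarrow> nat \<Rightarrow> 'r qf set" where
  "atomsf ar Lx n = (\<lambda>(R,is). QAtom R is) ` {(R,is). R \<in> Lx \<and> length is = ar R \<and> set is \<subseteq> {..<n}}
     \<union> (\<lambda>(i,j). QEq i j) ` ({..<n} \<times> {..<n})"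

lemma finite_atomsf: assumes "finite Lx" shows "finite (atomsf ar Lx n)"
proof -
  have "{(R,is). R \<in> Lx \<and> length is = ar R \<and> set is \<subseteq> {..<n}}
     \<subseteq> (\<Union>R\<in>Lx. {R} \<times> {is. set is \<subseteq> {..<n} \<and> length is = ar R})" by auto
  moreover have "finite (\<Union>R\<in>Lx. {R} \<times> {is. set is \<subseteq> {..<n} \<and> length is = ar R})"
    using assms by (auto intro!: finite_lists_length_eq)
  ultimately show ?thesis unfolding atomsf_def by (auto intro: finite_subset)
qed

lemma wf_atomsf: "a \<in> atomsf ar Lx n \<Longrightarrow> wf_qf ar Lx n a"
  by (auto simp: atomsf_def)

lemma atom_in_atomsf: "R \<in> Lx \<Longrightarrow> length is = ar R \<Longrightarrow> set is \<subseteq> {..<n} \<Longrightarrow> QAtom R is \<in> atomsf ar Lx n"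
  by (auto simp: atomsf_def)

lemma eq_in_atomsf: "i < n \<Longrightarrow> j < n \<Longrightarrow> QEq i j \<in> atomsf ar Lx n"
  by (auto simp: atomsf_def)

lemma definable:
  assumes fin: "finite Lx"
   and inv: "\<And>xs ys. length xs = n \<Longrightarrow> length ys = n \<Longrightarrow> set xs \<subseteq> U \<Longrightarrow> set ys \<subseteq> U \<Longrightarrow>
      (\<forall>a\<in>atomsf ar Lx n. sat M a (\<lambda>i. xs ! i) = sat M a (\<lambda>i. ys ! i)) \<Longrightarrow> Pr xs = Pr ys"
  shows "\<exists>\<phi>. wf_qf ar Lx n \<phi> \<and> (\<forall>xs. length xs = n \<and> set xs \<subseteq> U \<longrightarrow> (Pr xs \<longleftrightarrow> sat M \<phi> (\<lambda>i. xs ! i)))"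
proof -
  let ?A = "atomsf ar Lx n"
  have finA: "finite ?A" using fin by (rule finite_atomsf)
  obtain l0 where l0: "set l0 = ?A" using finite_list[OF finA] by blast
  define diag where "diag = (\<lambda>\<sigma>. qconj (map (\<lambda>a. if a \<in> \<sigma> then a else QNot a) l0))"
  have sat_diag: "sat M (diag \<sigma>) v \<longleftrightarrow> (\<forall>a\<in>?A. sat M a v \<longleftrightarrow> a \<in> \<sigma>)" for \<sigma> v
  proof -
    have "sat M (diag \<sigma>) v \<longleftrightarrow> (\<forall>a\<in>set l0. sat M (if a \<in> \<sigma> then a else QNot a) v)"
      unfolding diag_def by (induction l0) auto
    also have "\<dots> \<longleftrightarrow> (\<forall>a\<in>?A. sat M a v \<longleftrightarrow> a \<in> \<sigma>)"
      unfolding l0 by (intro ball_cong refl) auto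
    finally show ?thesis .
  qed
  have wf_diag: "wf_qf ar Lx n (diag \<sigma>)" for \<sigma>
    by (auto simp: diag_def wf_qconj l0 wf_atomsf)
  define Sg where "Sg = {\<sigma>. \<sigma> \<subseteq> ?A \<and> (\<exists>xs. length xs = n \<and> set xs \<subseteq> U \<and> Pr xs \<and> \<sigma> = {a\<in>?A. sat M a (\<lambda>i. xs ! i)})}"
  have "finite Sg" by (rule finite_subset[of _ "Pow ?A"]) (auto simp: Sg_def finA)
  then obtain ls where ls: "set ls = Sg" using finite_list by blast
  define \<phi> where "\<phi> = qdisj (map diag ls)"
  show ?thesis
  proof (intro exI conjI allI impI)
    show "wf_qf ar Lx n \<phi>" by (auto simp: \<phi>_def wf_qdisj wf_diag)
    fix ys assume ys: "length ys = n \<and> set ys \<subseteq> U"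
    show "Pr ys \<longleftrightarrow> sat M \<phi> (\<lambda>i. ys ! i)"
    proof
      assume "Pr ys"
      then have "{a\<in>?A. sat M a (\<lambda>i. ys!i)} \<in> Sg" using ys unfolding Sg_def by blast
      moreover have "sat M (diag {a\<in>?A. sat M a (\<lambda>i. ys!i)}) (\<lambda>i. ys!i)" by (simp add: sat_diag)
      ultimately show "sat M \<phi> (\<lambda>i. ys ! i)" unfolding \<phi>_def sat_qdisj set_map ls by blast
    next
      assume "sat M \<phi> (\<lambda>i. ys ! i)"
      then obtain \<sigma> where s: "\<sigma> \<in> Sg" "sat M (diag \<sigma>) (\<lambda>i. ys!i)" unfolding \<phi>_def sat_qdisj set_map using ls by blast
      then obtain xs where xs: "length xs = n" "set xs \<subseteq> U" "Pr xs" and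
        \<sigma>: "\<sigma> = {a\<in>?A. sat M a (\<lambda>i. xs!i)}" unfolding Sg_def by blast
      have "\<forall>a\<in>?A. sat M a (\<lambda>i. xs!i) = sat M a (\<lambda>i. ys!i)" using s(2) \<sigma> sat_diag by auto
      then show "Pr ys" using inv[of xs ys] xs ys by auto
    qed
  qed
qed



definition pb :: "('r \<Rightarrow> nat) \<Rightarrow> 'r set \<Rightarrow> ('r, 'b) struc \<Rightarrow> ('a \<Rightarrow> 'b) \<Rightarrow> ('r, 'a) struc \<Rightarrow> ('r, 'a) struc" where
  "pb ar Lx M f A = \<lparr>univ = univ A, rel = (\<lambda>R xs. R \<in> Lx \<and> length xs = ar R \<and> set xs \<subseteq> univ A \<and> rel M R (map f xs))\<rparr>"

lemma relK_of_exp: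
  assumes "is_expansion ar L Lx K M"
  shows "rel K R xs \<longleftrightarrow> R \<in> L \<and> rel M R xs"
proof -
  have "rel (reduct L M) = rel K" using assms unfolding is_expansion_def by simp
  then show ?thesis unfolding reduct_def by (simp add: fun_eq_iff)
qed

lemma struc_eqI: "univ (A::('r,'a) struc) = univ B \<Longrightarrow> rel A = rel B \<Longrightarrow> A = B"
  by (cases A, cases B) simp

lemma dot_eq:
  assumes A: "is_struc ar L A" and f: "f \<in> emb ar L A K" and E: "is_expansion ar L Lx K M"
  shows "dot ar L Lx M A f = pb ar Lx M f A"
proof -
  have LLx: "L \<subseteq> Lx" and sM: "is_struc ar Lx M" and uM: "univ M = univ K"
    using E unfolding is_expansion_def by auto
  note F = emb_D[OF f]
  have relK: "\<And>R xs. rel K R xs \<longleftrightarrow> R \<in> L \<and> rel M R xs" using relK_of_exp[OF E] .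
  have fe: "f \<in> emb ar Lx (pb ar Lx M f A) M"
    unfolding emb_def pb_def using F(1,2,3) uM by auto
  have red: "reduct L (pb ar Lx M f A) = A"
  proof (rule struc_eqI)
    show "univ (reduct L (pb ar Lx M f A)) = univ A" by (simp add: reduct_def pb_def)
    show "rel (reduct L (pb ar Lx M f A)) = rel A"
    proof (intro ext)
      fix R xs
      show "rel (reduct L (pb ar Lx M f A)) R xs = rel A R xs"
      proof (cases "R \<in> L \<and> length xs = ar R \<and> set xs \<subseteq> univ A")
        case True
        then show ?thesis using F(4)[of R xs] relK LLx by (auto simp: reduct_def pb_def)
      next
        case False
        then show ?thesis using A unfolding is_struc_def by (auto simp: reduct_def pb_def)
      qed
    qed
  qed
  have ex: "pb ar Lx M f A \<in> exp_age ar L Lx M A"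
    unfolding exp_age_def is_expansion_def using fe red LLx
    by (auto simp: is_struc_def pb_def)
  show ?thesis unfolding dot_def
  proof (rule the_equality)
    show "pb ar Lx M f A \<in> exp_age ar L Lx M A \<and> f \<in> emb ar Lx (pb ar Lx M f A) M"
      using ex fe by simp
    fix Bs assume Bs: "Bs \<in> exp_age ar L Lx M A \<and> f \<in> emb ar Lx Bs M"
    then have sB: "is_struc ar Lx Bs" and uB: "univ Bs = univ A"
      unfolding exp_age_def is_expansion_def by auto
    note G = emb_D[OF conjunct2[OF Bs]]
    show "Bs = pb ar Lx M f A"
    proof (rule struc_eqI)
      show "univ Bs = univ (pb ar Lx M f A)" using uB by (simp add: pb_def)
      show "rel Bs = rel (pb ar Lx M f A)"
      proof (intro ext)
        fix R xs
        show "rel Bs R xs = rel (pb ar Lx M f A) R xs"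
        proof (cases "R \<in> Lx \<and> length xs = ar R \<and> set xs \<subseteq> univ A")
          case True
          then show ?thesis using G(4)[of R xs] uB by (auto simp: pb_def)
        next
          case False
          then show ?thesis using sB uB unfolding is_struc_def by (auto simp: pb_def)
        qed
      qed
    qed
  qed
qed

locale setting =
  fixes ar :: "'r \<Rightarrow> nat" and L Ls Lp :: "'r set" and C :: "('r, 'a) struc set"
    and K Ks Kp :: "('r, 'a) struc"
  assumes finL: "finite L" and finLs: "finite Ls" and finLp: "finite Lp"
    and flim: "is_flim ar L C K" and fbrd: "finite_BRDs ar L C K"
    and brs_s: "big_ramsey_structure ar L Ls C K Ks"
    and brs_p: "big_ramsey_structure ar L Lp C K Kp"
begin

lemma exp_s: "is_expansion ar L Ls K Ks" using brs_s unfolding big_ramsey_structure_def by simp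
lemma exp_p: "is_expansion ar L Lp K Kp" using brs_p unfolding big_ramsey_structure_def by simp
lemma LLs: "L \<subseteq> Ls" using exp_s unfolding is_expansion_def by simp
lemma LLp: "L \<subseteq> Lp" using exp_p unfolding is_expansion_def by simp
lemma uKs: "univ Ks = univ K" using exp_s unfolding is_expansion_def by simp
lemma uKp: "univ Kp = univ K" using exp_p unfolding is_expansion_def by simp
lemma relKs: "rel K R xs \<longleftrightarrow> R \<in> L \<and> rel Ks R xs" by (rule relK_of_exp[OF exp_s])
lemma relKp: "rel K R xs \<longleftrightarrow> R \<in> L \<and> rel Kp R xs" by (rule relK_of_exp[OF exp_p])
lemma ageK: "age ar L K = C" using flim unfolding is_flim_def by simp

lemma C_D: assumes "A \<in> C" shows "is_struc ar L A" "finite (univ A)" "emb ar L A K \<noteq> {}"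
  using assms ageK unfolding age_def by auto

definition goodp where
  "goodp A g \<longleftrightarrow> (\<forall>f\<in>emb ar L A K. \<forall>f'\<in>emb ar L A K.
     (dot ar L Ls Ks A (compose (univ A) g f) = dot ar L Ls Ks A (compose (univ A) g f')) \<longleftrightarrow>
     (dot ar L Lp Kp A (compose (univ A) g f) = dot ar L Lp Kp A (compose (univ A) g f')))"

lemma compose_emb_assoc:
  assumes "f \<in> emb ar L A K"
  shows "compose (univ A) (compose (univ K) g0 g1) f = compose (univ A) g0 (compose (univ A) g1 f)"
proof -
  have "f \<in> univ A \<rightarrow> univ K" using emb_D(2)[OF assms] by auto
  then show ?thesis by (simp add: compose_assoc)
qed

lemma goodp_mono:
  assumes "goodp A g" "g1 \<in> emb ar L K K"
  shows "goodp A (compose (univ K) g g1)"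
  unfolding goodp_def
proof (intro ballI)
  fix f f' assume f: "f \<in> emb ar L A K" and f': "f' \<in> emb ar L A K"
  have "compose (univ A) g1 f \<in> emb ar L A K" "compose (univ A) g1 f' \<in> emb ar L A K"
    using emb_compose f f' assms(2) by blast+
  then show "(dot ar L Ls Ks A (compose (univ A) (compose (univ K) g g1) f) =
         dot ar L Ls Ks A (compose (univ A) (compose (univ K) g g1) f')) =
        (dot ar L Lp Kp A (compose (univ A) (compose (univ K) g g1) f) =
         dot ar L Lp Kp A (compose (univ A) (compose (univ K) g g1) f'))"
    using assms(1) unfolding goodp_def compose_emb_assoc[OF f] compose_emb_assoc[OF f'] by blast
qed

lemma step:
  assumes A: "A \<in> C" and g0: "g0 \<in> emb ar L K K"
  shows "\<exists>g1\<in>emb ar L K K. goodp A (compose (univ K) g0 g1)"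
proof -
  define t where "t = BRD ar L A K"
  have wit: "brd_witness ar L A K t"
  proof -
    obtain t0 where "brd_witness ar L A K t0" using fbrd A unfolding finite_BRDs_def by blast
    then show ?thesis unfolding t_def BRD_def by (rule LeastI)
  qed
  obtain f00 where f00: "f00 \<in> emb ar L A K" using C_D(3)[OF A] by blast
  define D where "D = (\<lambda>Lx (M::('r,'a) struc) (g::'a \<Rightarrow> 'a). (\<lambda>f. dot ar L Lx M A f) ` ((\<lambda>f. compose (univ A) g f) ` emb ar L A K))"
  have B1: "card (exp_age ar L Ls Ks A) = t \<and> (\<forall>g\<in>emb ar L K K. card (D Ls Ks g) = card (exp_age ar L Ls Ks A))"
    using brs_s A unfolding big_ramsey_structure_def D_def t_def by blast
  have B2: "card (exp_age ar L Lp Kp A) = t \<and> (\<forall>g\<in>emb ar L K K. card (D Lp Kp g) = card (exp_age ar L Lp Kp A))"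
    using brs_p A unfolding big_ramsey_structure_def D_def t_def by blast
  have cardDs: "card (D Ls Ks g) = t" if "g \<in> emb ar L K K" for g
    using B1 that by simp
  have cardDp: "card (D Lp Kp g) = t" if "g \<in> emb ar L K K" for g
    using B2 that by simp
  have W: "\<And>r \<chi>. r > t \<Longrightarrow> \<chi> \<in> emb ar L A K \<rightarrow> {..<r} \<Longrightarrow>
      \<exists>g\<in>emb ar L K K. card (\<chi> ` ((\<lambda>f. compose (univ A) g f) ` emb ar L A K)) \<le> t"
    using wit unfolding brd_witness_def by blast
  have t1: "t \<ge> 1"
  proof (rule ccontr)
    assume "\<not> 1 \<le> t" hence t0: "t = 0" by simp
    have z: "(\<lambda>_. 0::nat) \<in> emb ar L A K \<rightarrow> {..<1}" by auto
    obtain g :: "'a \<Rightarrow> 'a" where "card ((\<lambda>_. 0::nat) ` ((\<lambda>f. compose (univ A) g f) ` emb ar L A K)) \<le> t"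
      using W[of 1 "\<lambda>_. 0::nat", OF _ z] t0 by (metis less_one)
    moreover have "(\<lambda>_. 0::nat) ` ((\<lambda>f. compose (univ A) g f) ` emb ar L A K) = {0}" using f00 by auto
    ultimately show False using t0 by simp
  qed
  have finDs: "finite (D Ls Ks g)" if "g \<in> emb ar L K K" for g
    using cardDs[OF that] t1 by (intro card_ge_0_finite) simp
  have finDp: "finite (D Lp Kp g)" if "g \<in> emb ar L K K" for g
    using cardDp[OF that] t1 by (intro card_ge_0_finite) simp
  define pr where "pr = (\<lambda>(g::'a\<Rightarrow>'a) (f::'a\<Rightarrow>'a). (dot ar L Ls Ks A (compose (univ A) g f), dot ar L Lp Kp A (compose (univ A) g f)))"
  define Q where "Q = (\<lambda>g::'a\<Rightarrow>'a. pr g ` emb ar L A K)"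
  have QD: "Q g \<subseteq> D Ls Ks g \<times> D Lp Kp g" for g
  proof (rule subsetI)
    fix p assume "p \<in> Q g"
    then obtain f where f: "f \<in> emb ar L A K" "p = pr g f" unfolding Q_def by blast
    have "compose (univ A) g f \<in> (\<lambda>f. compose (univ A) g f) ` emb ar L A K" using f(1) by (rule imageI)
    then show "p \<in> D Ls Ks g \<times> D Lp Kp g" unfolding f(2) pr_def D_def by blast
  qed
  have finQ: "finite (Q g)" if "g \<in> emb ar L K K" for g
    by (rule finite_subset[OF QD]) (intro finite_cartesian_product finDs finDp that)
  obtain idx where idx: "bij_betw idx (Q g0) {0..<card (Q g0)}"
    using ex_bij_betw_finite_nat[OF finQ[OF g0]] by blast
  define r where "r = card (Q g0) + t + 1"
  define \<chi> where "\<chi> = (\<lambda>f::'a\<Rightarrow>'a. idx (pr g0 f))"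
  have \<chi>: "\<chi> \<in> emb ar L A K \<rightarrow> {..<r}"
  proof
    fix f assume "f \<in> emb ar L A K"
    then have "pr g0 f \<in> Q g0" unfolding Q_def by blast
    then have "idx (pr g0 f) < card (Q g0)" using bij_betwE[OF idx] by auto
    then show "\<chi> f \<in> {..<r}" unfolding \<chi>_def r_def by simp
  qed
  have rt: "r > t" unfolding r_def by simp
  obtain g1 where g1: "g1 \<in> emb ar L K K"
    and c: "card (\<chi> ` ((\<lambda>f. compose (univ A) g1 f) ` emb ar L A K)) \<le> t"
    using W[OF rt \<chi>] by blast
  define g where "g = compose (univ K) g0 g1"
  have g: "g \<in> emb ar L K K" unfolding g_def by (rule emb_compose[OF g1 g0])
  have prg: "pr g f = pr g0 (compose (univ A) g1 f)" if "f \<in> emb ar L A K" for f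
    unfolding pr_def g_def compose_emb_assoc[OF that] ..
  have Qg: "Q g = pr g0 ` ((\<lambda>f. compose (univ A) g1 f) ` emb ar L A K)"
  proof -
    have "Q g = (\<lambda>f. pr g0 (compose (univ A) g1 f)) ` emb ar L A K"
      unfolding Q_def using prg by (rule image_cong[OF refl])
    then show ?thesis by (simp add: image_image)
  qed
  have sub: "(\<lambda>f. compose (univ A) g1 f) ` emb ar L A K \<subseteq> emb ar L A K"
    using emb_compose[OF _ g1] by blast
  have QQ: "Q g \<subseteq> Q g0"
  proof -
    have "Q g \<subseteq> pr g0 ` emb ar L A K" unfolding Qg by (rule image_mono[OF sub])
    moreover have "pr g0 ` emb ar L A K = Q g0" by (simp add: Q_def)
    ultimately show ?thesis by simp
  qed
  have inj: "inj_on idx (Q g)" by (rule inj_on_subset[OF bij_betw_imp_inj_on[OF idx] QQ])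
  have "\<chi> ` ((\<lambda>f. compose (univ A) g1 f) ` emb ar L A K) = idx ` Q g"
    unfolding Qg \<chi>_def image_image by simp
  then have cQ: "card (Q g) \<le> t" using c card_image[OF inj] by simp
  have finQg: "finite (Q g)" using finQ[OF g] .
  have "fst ` Q g = D Ls Ks g" unfolding Q_def pr_def D_def image_image by simp
  then have "card (fst ` Q g) = t" using cardDs[OF g] by simp
  then have "card (fst ` Q g) = card (Q g)" using cQ card_image_le[OF finQg, of fst] by simp
  then have inj1: "inj_on fst (Q g)" by (rule eq_card_imp_inj_on[OF finQg])
  have "snd ` Q g = D Lp Kp g" unfolding Q_def pr_def D_def image_image by simp
  then have "card (snd ` Q g) = t" using cardDp[OF g] by simp
  then have "card (snd ` Q g) = card (Q g)" using cQ card_image_le[OF finQg, of snd] by simp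
  then have inj2: "inj_on snd (Q g)" by (rule eq_card_imp_inj_on[OF finQg])
  have "goodp A g"
    unfolding goodp_def
  proof (intro ballI)
    fix f f' assume f: "f \<in> emb ar L A K" and f': "f' \<in> emb ar L A K"
    have m: "pr g f \<in> Q g" "pr g f' \<in> Q g" unfolding Q_def using f f' by auto
    show "(dot ar L Ls Ks A (compose (univ A) g f) = dot ar L Ls Ks A (compose (univ A) g f')) =
          (dot ar L Lp Kp A (compose (univ A) g f) = dot ar L Lp Kp A (compose (univ A) g f'))"
    proof
      assume "dot ar L Ls Ks A (compose (univ A) g f) = dot ar L Ls Ks A (compose (univ A) g f')"
      then have "fst (pr g f) = fst (pr g f')" unfolding pr_def by simp
      then have "pr g f = pr g f'" using inj1 m by (auto dest: inj_onD)
      then show "dot ar L Lp Kp A (compose (univ A) g f) = dot ar L Lp Kp A (compose (univ A) g f')"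
        unfolding pr_def by simp
    next
      assume "dot ar L Lp Kp A (compose (univ A) g f) = dot ar L Lp Kp A (compose (univ A) g f')"
      then have "snd (pr g f) = snd (pr g f')" unfolding pr_def by simp
      then have "pr g f = pr g f'" using inj2 m by (auto dest: inj_onD)
      then show "dot ar L Ls Ks A (compose (univ A) g f) = dot ar L Ls Ks A (compose (univ A) g f')"
        unfolding pr_def by simp
    qed
  qed
  then show ?thesis using g1 unfolding g_def by blast
qed

lemma multi:
  assumes "finite F" "F \<subseteq> C"
  shows "\<exists>g\<in>emb ar L K K. \<forall>A\<in>F. goodp A g"
  using assms
proof (induction F rule: finite_induct)
  case empty
  then show ?case using emb_id by blast
next
  case (insert A F)
  then obtain g where g: "g \<in> emb ar L K K" "\<forall>B\<in>F. goodp B g" by auto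
  obtain g1 where g1: "g1 \<in> emb ar L K K" "goodp A (compose (univ K) g g1)"
    using step[OF _ g(1), of A] insert.prems by auto
  have "compose (univ K) g g1 \<in> emb ar L K K" using emb_compose[OF g1(1) g(1)] .
  moreover have "\<forall>B\<in>insert A F. goodp B (compose (univ K) g g1)"
    using g1(2) g(2) goodp_mono g1(1) by auto
  ultimately show ?case by blast
qed

end



definition idxof :: "'a list \<Rightarrow> 'a \<Rightarrow> nat" where
  "idxof r z = (SOME i. i < length r \<and> r ! i = z)"

lemma idxof: "z \<in> set r \<Longrightarrow> idxof r z < length r \<and> r ! idxof r z = z"
  unfolding idxof_def by (rule someI_ex) (metis in_set_conv_nth)

lemma zs_repr:
  assumes "set zs \<subseteq> set r"
  shows "map ((!) r) (map (idxof r) zs) = zs" "set (map (idxof r) zs) \<subseteq> {..<length r}"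
  using assms by (induction zs) (auto simp: idxof)

lemma set_map_nth_sub:
  assumes "set is \<subseteq> {..<length xs}" "set xs \<subseteq> U"
  shows "set (map ((!) xs) is) \<subseteq> U"
proof
  fix y assume "y \<in> set (map ((!) xs) is)"
  then obtain i where "i \<in> set is" "y = xs ! i" by auto
  then show "y \<in> U" using assms nth_mem by blast
qed

lemma map_restrict_id: "set zs \<subseteq> U \<Longrightarrow> map (restrict id U) zs = zs"
  by (induction zs) auto

context setting
begin

definition N where "N = ar ` (Ls \<union> Lp)"
definition T where "T = {xs. length xs \<in> N \<and> set xs \<subseteq> univ K}"
definition ltp where "ltp xs = (length xs,
   {(R,is). R \<in> L \<and> length is = ar R \<and> set is \<subseteq> {..<length xs} \<and> rel K R (map ((!) xs) is)},
   {(i,j). i < length xs \<and> j < length xs \<and> xs ! i = xs ! j})"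
definition ind where "ind r = \<lparr>univ = set r, rel = (\<lambda>R zs. R \<in> L \<and> length zs = ar R \<and> set zs \<subseteq> set r \<and> rel K R zs)\<rparr>"
definition tm where "tm r xs = restrict (\<lambda>z. xs ! idxof r z) (set r)"

lemma univ_ind[simp]: "univ (ind r) = set r" by (simp add: ind_def)

lemma ltp_eqD:
  assumes "ltp r = ltp xs"
  shows "length r = length xs"
    and "\<And>i j. i < length r \<Longrightarrow> j < length r \<Longrightarrow> r ! i = r ! j \<longleftrightarrow> xs ! i = xs ! j"
    and "\<And>R is. R \<in> L \<Longrightarrow> length is = ar R \<Longrightarrow> set is \<subseteq> {..<length r} \<Longrightarrow>
           rel K R (map ((!) r) is) \<longleftrightarrow> rel K R (map ((!) xs) is)"
proof -
  show e1: "length r = length xs" using assms by (simp add: ltp_def)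
  have e2: "{(i,j). i < length r \<and> j < length r \<and> r ! i = r ! j} = {(i,j). i < length xs \<and> j < length xs \<and> xs ! i = xs ! j}"
    using arg_cong[OF assms, of "\<lambda>x. snd (snd x)"] unfolding ltp_def by simp
  have e3: "{(R,is). R \<in> L \<and> length is = ar R \<and> set is \<subseteq> {..<length r} \<and> rel K R (map ((!) r) is)}
     = {(R,is). R \<in> L \<and> length is = ar R \<and> set is \<subseteq> {..<length xs} \<and> rel K R (map ((!) xs) is)}"
    using arg_cong[OF assms, of "\<lambda>x. fst (snd x)"] unfolding ltp_def by simp
  fix i j assume "i < length r" "j < length r"
  then show "r ! i = r ! j \<longleftrightarrow> xs ! i = xs ! j"
    using e2 e1 by (simp add: set_eq_iff) (metis (no_types, lifting) case_prod_conv)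
next
  fix R "is" assume a: "R \<in> L" "length is = ar R" "set is \<subseteq> {..<length r}"
  have e1: "length r = length xs" using assms by (simp add: ltp_def)
  have e3: "{(R,is). R \<in> L \<and> length is = ar R \<and> set is \<subseteq> {..<length r} \<and> rel K R (map ((!) r) is)}
     = {(R,is). R \<in> L \<and> length is = ar R \<and> set is \<subseteq> {..<length xs} \<and> rel K R (map ((!) xs) is)}"
    using arg_cong[OF assms, of "\<lambda>x. fst (snd x)"] unfolding ltp_def by simp
  then have "(R,is) \<in> {(R,is). R \<in> L \<and> length is = ar R \<and> set is \<subseteq> {..<length r} \<and> rel K R (map ((!) r) is)}
     \<longleftrightarrow> (R,is) \<in> {(R,is). R \<in> L \<and> length is = ar R \<and> set is \<subseteq> {..<length xs} \<and> rel K R (map ((!) xs) is)}"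
    by simp
  then show "rel K R (map ((!) r) is) \<longleftrightarrow> rel K R (map ((!) xs) is)" using a e1 by simp
qed

lemma ltp_eqI:
  assumes "length xs = length ys"
    and "\<And>i j. i < length xs \<Longrightarrow> j < length xs \<Longrightarrow> xs ! i = xs ! j \<longleftrightarrow> ys ! i = ys ! j"
    and "\<And>R is. R \<in> L \<Longrightarrow> length is = ar R \<Longrightarrow> set is \<subseteq> {..<length xs} \<Longrightarrow>
           rel K R (map ((!) xs) is) \<longleftrightarrow> rel K R (map ((!) ys) is)"
  shows "ltp xs = ltp ys"
proof -
  have "{(R,is). R \<in> L \<and> length is = ar R \<and> set is \<subseteq> {..<length xs} \<and> rel K R (map ((!) xs) is)}
     = {(R,is). R \<in> L \<and> length is = ar R \<and> set is \<subseteq> {..<length ys} \<and> rel K R (map ((!) ys) is)}"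
    using assms by auto
  moreover have "{(i,j). i < length xs \<and> j < length xs \<and> xs ! i = xs ! j} = {(i,j). i < length ys \<and> j < length ys \<and> ys ! i = ys ! j}"
    using assms by auto
  ultimately show ?thesis using assms(1) unfolding ltp_def by simp
qed

lemma tm_nth:
  assumes "ltp r = ltp xs" "i < length r"
  shows "tm r xs (r ! i) = xs ! i"
proof -
  have m: "r ! i \<in> set r" using assms(2) by simp
  let ?j = "idxof r (r ! i)"
  have j: "?j < length r" "r ! ?j = r ! i" using idxof[OF m] by auto
  then have "xs ! ?j = xs ! i" using ltp_eqD(2)[OF assms(1) j(1) assms(2)] by simp
  then show ?thesis using m by (simp add: tm_def)
qed

lemma map_tm:
  assumes "ltp r = ltp xs" "set is \<subseteq> {..<length r}"
  shows "map (tm r xs) (map ((!) r) is) = map ((!) xs) is"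
  using assms(2) by (induction "is") (auto simp: tm_nth[OF assms(1)])

lemma ind_struc: "is_struc ar L (ind r)" by (auto simp: is_struc_def ind_def)

lemma ind_C:
  assumes "set r \<subseteq> univ K"
  shows "ind r \<in> C"
proof -
  have "restrict id (set r) \<in> emb ar L (ind r) K"
    unfolding emb_def using assms by (auto simp: ind_def map_restrict_id inj_on_def)
  then show ?thesis unfolding ageK[symmetric] age_def using ind_struc by auto
qed

lemma tm_emb:
  assumes r: "set r \<subseteq> univ K" and xs: "set xs \<subseteq> univ K" and e: "ltp r = ltp xs"
  shows "tm r xs \<in> emb ar L (ind r) K"
  unfolding emb_def
proof (intro CollectI conjI ballI allI impI)
  note len = ltp_eqD(1)[OF e]
  show "tm r xs \<in> extensional (univ (ind r))" by (simp add: tm_def)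
  show "tm r xs ` univ (ind r) \<subseteq> univ K"
  proof
    fix y assume "y \<in> tm r xs ` univ (ind r)"
    then obtain z where z: "z \<in> set r" "y = tm r xs z" by auto
    then obtain i where i: "i < length r" "z = r ! i" by (metis in_set_conv_nth)
    then have "y = xs ! i" using z tm_nth[OF e] by simp
    then show "y \<in> univ K" using xs i len by auto
  qed
  show "inj_on (tm r xs) (univ (ind r))"
  proof (rule inj_onI)
    fix z z' assume z: "z \<in> univ (ind r)" "z' \<in> univ (ind r)" "tm r xs z = tm r xs z'"
    obtain i where i: "i < length r" "z = r ! i" using z(1) by (metis in_set_conv_nth univ_ind)
    obtain j where j: "j < length r" "z' = r ! j" using z(2) by (metis in_set_conv_nth univ_ind)
    have "xs ! i = xs ! j" using z(3) i j tm_nth[OF e] by simp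
    then show "z = z'" using ltp_eqD(2)[OF e i(1) j(1)] i j by simp
  qed
  fix R zs assume R: "R \<in> L" and zs: "length zs = ar R \<and> set zs \<subseteq> univ (ind r)"
  define "is" where "is = map (idxof r) zs"
  have zr: "map ((!) r) is = zs" "set is \<subseteq> {..<length r}" using zs_repr[of zs r] zs by (auto simp: is_def)
  have li: "length is = ar R" using zs by (simp add: is_def)
  have "rel (ind r) R zs \<longleftrightarrow> rel K R (map ((!) r) is)" using R zs zr by (simp add: ind_def)
  also have "\<dots> \<longleftrightarrow> rel K R (map ((!) xs) is)" by (rule ltp_eqD(3)[OF e R li zr(2)])
  also have "map ((!) xs) is = map (tm r xs) zs" using map_tm[OF e zr(2)] zr(1) by simp
  finally show "rel (ind r) R zs = rel K R (map (tm r xs) zs)" .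
qed

lemma fin_ltp: "finite (ltp ` T)"
proof -
  have fN: "finite N" unfolding N_def using finLs finLp by simp
  have "ltp ` T \<subseteq> N \<times> Pow (\<Union>n\<in>N. \<Union>R\<in>L. {R} \<times> {is. set is \<subseteq> {..<n} \<and> length is = ar R})
        \<times> Pow (\<Union>n\<in>N. {..<n} \<times> {..<n})"
    by (auto simp: T_def ltp_def)
  moreover have "finite (N \<times> Pow (\<Union>n\<in>N. \<Union>R\<in>L. {R} \<times> {is. set is \<subseteq> {..<n} \<and> length is = ar R})
        \<times> Pow (\<Union>n\<in>N. {..<n} \<times> {..<n}))"
  proof -
    have f1: "finite (\<Union>n\<in>N. \<Union>R\<in>L. {R} \<times> {is. set is \<subseteq> {..<n} \<and> length is = ar R})"
      using fN finL by (auto intro!: finite_lists_length_eq)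
    have f2: "finite (\<Union>n\<in>N. {..<n} \<times> {..<n})" using fN by auto
    show ?thesis using fN f1 f2 by simp
  qed
  ultimately show ?thesis by (rule finite_subset)
qed

definition Reps where "Reps = (\<lambda>\<tau>. SOME xs. xs \<in> T \<and> ltp xs = \<tau>) ` (ltp ` T)"

lemma Reps_fin: "finite Reps" unfolding Reps_def using fin_ltp by simp

lemma Reps_T: "r \<in> Reps \<Longrightarrow> r \<in> T"
  unfolding Reps_def by (auto intro: someI2)

lemma Reps_ex: assumes "xs \<in> T" shows "\<exists>r\<in>Reps. ltp r = ltp xs"
proof -
  let ?r = "SOME ys. ys \<in> T \<and> ltp ys = ltp xs"
  have "\<exists>ys. ys \<in> T \<and> ltp ys = ltp xs" using assms by blast
  then have "?r \<in> T \<and> ltp ?r = ltp xs" by (rule someI_ex)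
  moreover have "?r \<in> Reps" unfolding Reps_def using assms by blast
  ultimately show ?thesis by blast
qed

end



context setting
begin

lemma dir:
  assumes rec: "recurrent ar L Ls K Ks"
  shows "\<exists>\<eta>\<in>emb ar L K K. bi_interpretable ar Ls Ks Lp (pull ar Lp Kp \<eta>)"
proof -
  have FC: "ind ` Reps \<subseteq> C" using Reps_T ind_C by (auto simp: T_def)
  obtain g where g: "g \<in> emb ar L K K" and gg: "\<forall>A\<in>ind ` Reps. goodp A g"
    using multi[OF finite_imageI[OF Reps_fin] FC] by blast
  obtain h where h: "h \<in> emb ar Ls Ks (pull ar Ls Ks g)" using rec g unfolding recurrent_def by blast
  note H = emb_D[OF h]
  note G = emb_D[OF g]
  have upull: "univ (pull ar Ls Ks g) = univ K" by (simp add: pull_def uKs)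
  have hrec: "rel Ks R w \<longleftrightarrow> rel Ks R (map g (map h w))"
    if "R \<in> Ls" "length w = ar R" "set w \<subseteq> univ K" for R w
  proof -
    have "set (map h w) \<subseteq> univ Ks"
    proof -
      have "h ` set w \<subseteq> h ` univ K" using that(3) by (intro image_mono) simp
      then show ?thesis using H(2) uKs upull by simp
    qed
    then show ?thesis using H(4)[OF that(1,2)] that uKs by (auto simp: pull_def)
  qed
  have hK: "h \<in> emb ar L K K"
    unfolding emb_def
  proof (intro CollectI conjI ballI allI impI)
    show "h \<in> extensional (univ K)" using H(1) uKs by simp
    show "h ` univ K \<subseteq> univ K" using H(2) uKs upull by simp
    show "inj_on h (univ K)" using H(3) uKs by simp
    fix R w assume R: "R \<in> L" and w: "length w = ar R \<and> set w \<subseteq> univ K"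
    have hw: "set (map h w) \<subseteq> univ K"
    proof -
      have "h ` set w \<subseteq> h ` univ K" using w by (intro image_mono) simp
      then show ?thesis using H(2) uKs upull by simp
    qed
    have "rel K R w \<longleftrightarrow> rel Ks R w" using R relKs by simp
    also have "\<dots> \<longleftrightarrow> rel Ks R (map g (map h w))" using hrec R LLs w by auto
    also have "\<dots> \<longleftrightarrow> rel K R (map g (map h w))" using R relKs by simp
    also have "\<dots> \<longleftrightarrow> rel K R (map h w)" using G(4)[OF R _ hw] w by simp
    finally show "rel K R w = rel K R (map h w)" .
  qed
  define \<eta> where "\<eta> = compose (univ K) g h"
  have eta: "\<eta> \<in> emb ar L K K" unfolding \<eta>_def by (rule emb_compose[OF hK g])
  have mapeta: "map \<eta> w = map g (map h w)" if "set w \<subseteq> univ K" for w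
    unfolding \<eta>_def using that by (rule map_compose)
  have etarec: "rel Ks R (map \<eta> w) \<longleftrightarrow> rel Ks R w"
    if "R \<in> Ls" "length w = ar R" "set w \<subseteq> univ K" for R w
    using hrec[OF that] mapeta[OF that(3)] by metis
  have Fmap: "map (compose (set r) g (compose (set r) h (tm r xs))) (map ((!) r) is) = map \<eta> (map ((!) xs) is)"
    if "ltp r = ltp xs" "set xs \<subseteq> univ K" "set is \<subseteq> {..<length r}" for r xs "is"
  proof -
    have s1: "set (map ((!) r) is) \<subseteq> set r" using that(3) by auto
    have s2: "set (map ((!) xs) is) \<subseteq> univ K" by (rule set_map_nth_sub) (use that(2,3) ltp_eqD(1)[OF that(1)] in auto)
    show ?thesis
      using map_compose[OF s1, of g] map_compose[OF s1, of h] map_tm[OF that(1,3)] mapeta[OF s2] by simp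
  qed
  have pbiff: "pb ar Lx M (compose (set r) g (compose (set r) h (tm r xs))) (ind r)
             = pb ar Lx M (compose (set r) g (compose (set r) h (tm r ys))) (ind r)
      \<longleftrightarrow> (\<forall>R\<in>Lx. \<forall>is. length is = ar R \<and> set is \<subseteq> {..<length r} \<longrightarrow>
            (rel M R (map \<eta> (map ((!) xs) is)) \<longleftrightarrow> rel M R (map \<eta> (map ((!) ys) is))))"
    if "ltp r = ltp xs" "ltp r = ltp ys" "set xs \<subseteq> univ K" "set ys \<subseteq> univ K"
    for Lx and M :: "('r,'a) struc" and r xs ys
  proof
    assume eq: "pb ar Lx M (compose (set r) g (compose (set r) h (tm r xs))) (ind r)
             = pb ar Lx M (compose (set r) g (compose (set r) h (tm r ys))) (ind r)"
    show "\<forall>R\<in>Lx. \<forall>is. length is = ar R \<and> set is \<subseteq> {..<length r} \<longrightarrow>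
            (rel M R (map \<eta> (map ((!) xs) is)) \<longleftrightarrow> rel M R (map \<eta> (map ((!) ys) is)))"
    proof (intro ballI allI impI)
      fix R "is" assume R: "R \<in> Lx" and i: "length is = ar R \<and> set is \<subseteq> {..<length r}"
      have "rel (pb ar Lx M (compose (set r) g (compose (set r) h (tm r xs))) (ind r)) R (map ((!) r) is)
          = rel (pb ar Lx M (compose (set r) g (compose (set r) h (tm r ys))) (ind r)) R (map ((!) r) is)"
        using eq by simp
      moreover have "set (map ((!) r) is) \<subseteq> set r" using i by auto
      ultimately have "rel M R (map (compose (set r) g (compose (set r) h (tm r xs))) (map ((!) r) is))
         \<longleftrightarrow> rel M R (map (compose (set r) g (compose (set r) h (tm r ys))) (map ((!) r) is))"
        using R i by (simp add: pb_def del: map_map)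
      then show "rel M R (map \<eta> (map ((!) xs) is)) \<longleftrightarrow> rel M R (map \<eta> (map ((!) ys) is))"
        unfolding Fmap[OF that(1,3) conjunct2[OF i]] Fmap[OF that(2,4) conjunct2[OF i]] .
    qed
  next
    assume A: "\<forall>R\<in>Lx. \<forall>is. length is = ar R \<and> set is \<subseteq> {..<length r} \<longrightarrow>
            (rel M R (map \<eta> (map ((!) xs) is)) \<longleftrightarrow> rel M R (map \<eta> (map ((!) ys) is)))"
    show "pb ar Lx M (compose (set r) g (compose (set r) h (tm r xs))) (ind r)
             = pb ar Lx M (compose (set r) g (compose (set r) h (tm r ys))) (ind r)"
    proof (rule struc_eqI)
      show "univ (pb ar Lx M (compose (set r) g (compose (set r) h (tm r xs))) (ind r)) =
            univ (pb ar Lx M (compose (set r) g (compose (set r) h (tm r ys))) (ind r))"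
        by (simp add: pb_def)
      show "rel (pb ar Lx M (compose (set r) g (compose (set r) h (tm r xs))) (ind r)) =
            rel (pb ar Lx M (compose (set r) g (compose (set r) h (tm r ys))) (ind r))"
      proof (intro ext)
        fix R zs
        show "rel (pb ar Lx M (compose (set r) g (compose (set r) h (tm r xs))) (ind r)) R zs =
              rel (pb ar Lx M (compose (set r) g (compose (set r) h (tm r ys))) (ind r)) R zs"
        proof (cases "R \<in> Lx \<and> length zs = ar R \<and> set zs \<subseteq> set r")
          case True
          define "is" where "is = map (idxof r) zs"
          have zr: "map ((!) r) is = zs" "set is \<subseteq> {..<length r}"
            using zs_repr[of zs r] True by (auto simp: is_def)
          have li: "length is = ar R" using True by (simp add: is_def)
          have "rel M R (map \<eta> (map ((!) xs) is)) \<longleftrightarrow> rel M R (map \<eta> (map ((!) ys) is))"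
            using A True li zr(2) by blast
          moreover have "map (compose (set r) g (compose (set r) h (tm r xs))) zs = map \<eta> (map ((!) xs) is)"
            using Fmap[OF that(1,3) zr(2)] unfolding zr(1) .
          moreover have "map (compose (set r) g (compose (set r) h (tm r ys))) zs = map \<eta> (map ((!) ys) is)"
            using Fmap[OF that(2,4) zr(2)] unfolding zr(1) .
          ultimately show ?thesis
            using True by (simp add: pb_def del: map_map)
        next
          case False
          then show ?thesis by (auto simp add: pb_def)
        qed
      qed
    qed
  qed
  have core: "(\<forall>R\<in>Ls. \<forall>is. length is = ar R \<and> set is \<subseteq> {..<length xs} \<longrightarrow>
            (rel Ks R (map \<eta> (map ((!) xs) is)) \<longleftrightarrow> rel Ks R (map \<eta> (map ((!) ys) is))))
       \<longleftrightarrow> (\<forall>R\<in>Lp. \<forall>is. length is = ar R \<and> set is \<subseteq> {..<length xs} \<longrightarrow>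
            (rel Kp R (map \<eta> (map ((!) xs) is)) \<longleftrightarrow> rel Kp R (map \<eta> (map ((!) ys) is))))"
    if xs: "xs \<in> T" and ys: "ys \<in> T" and e: "ltp xs = ltp ys" for xs ys
  proof -
    obtain r where r: "r \<in> Reps" "ltp r = ltp xs" using Reps_ex[OF xs] by blast
    have ry: "ltp r = ltp ys" using r(2) e by simp
    have lr: "length r = length xs" using ltp_eqD(1)[OF r(2)] .
    have sr: "set r \<subseteq> univ K" using Reps_T[OF r(1)] by (simp add: T_def)
    have sx: "set xs \<subseteq> univ K" and sy: "set ys \<subseteq> univ K" using xs ys by (auto simp: T_def)
    have fx: "tm r xs \<in> emb ar L (ind r) K" by (rule tm_emb[OF sr sx r(2)])
    have fy: "tm r ys \<in> emb ar L (ind r) K" by (rule tm_emb[OF sr sy ry])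
    have f0x: "compose (set r) h (tm r xs) \<in> emb ar L (ind r) K" using emb_compose[OF fx hK] by simp
    have f0y: "compose (set r) h (tm r ys) \<in> emb ar L (ind r) K" using emb_compose[OF fy hK] by simp
    have f1x: "compose (set r) g (compose (set r) h (tm r xs)) \<in> emb ar L (ind r) K"
      using emb_compose[OF f0x g] by simp
    have f1y: "compose (set r) g (compose (set r) h (tm r ys)) \<in> emb ar L (ind r) K"
      using emb_compose[OF f0y g] by simp
    have gp: "goodp (ind r) g" using gg r(1) by blast
    have "(dot ar L Ls Ks (ind r) (compose (set r) g (compose (set r) h (tm r xs)))
            = dot ar L Ls Ks (ind r) (compose (set r) g (compose (set r) h (tm r ys))))
       \<longleftrightarrow> (dot ar L Lp Kp (ind r) (compose (set r) g (compose (set r) h (tm r xs)))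
            = dot ar L Lp Kp (ind r) (compose (set r) g (compose (set r) h (tm r ys))))"
      using gp f0x f0y unfolding goodp_def by simp
    then have "(pb ar Ls Ks (compose (set r) g (compose (set r) h (tm r xs))) (ind r)
            = pb ar Ls Ks (compose (set r) g (compose (set r) h (tm r ys))) (ind r))
       \<longleftrightarrow> (pb ar Lp Kp (compose (set r) g (compose (set r) h (tm r xs))) (ind r)
            = pb ar Lp Kp (compose (set r) g (compose (set r) h (tm r ys))) (ind r))"
      using dot_eq[OF ind_struc f1x exp_s] dot_eq[OF ind_struc f1y exp_s]
        dot_eq[OF ind_struc f1x exp_p] dot_eq[OF ind_struc f1y exp_p] by simp
    then show ?thesis
      using pbiff[OF r(2) ry sx sy, of Ls Ks] pbiff[OF r(2) ry sx sy, of Lp Kp] lr by simp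
  qed
  have uKpK: "univ (pull ar Lp Kp \<eta>) = univ K" by (simp add: pull_def uKp)
  have NLs: "ar R \<in> N" if "R \<in> Ls" for R using that by (simp add: N_def)
  have NLp: "ar R \<in> N" if "R \<in> Lp" for R using that by (simp add: N_def)
  have q1: "qf_interprets ar Ls Ks Lp (pull ar Lp Kp \<eta>)"
    unfolding qf_interprets_def
  proof
    fix R0 assume R0: "R0 \<in> Lp"
    let ?n = "ar R0"
    have "\<exists>\<phi>. wf_qf ar Ls ?n \<phi> \<and> (\<forall>xs. length xs = ?n \<and> set xs \<subseteq> univ K \<longrightarrow>
            (rel (pull ar Lp Kp \<eta>) R0 xs \<longleftrightarrow> sat Ks \<phi> (\<lambda>i. xs ! i)))"
    proof (rule definable[OF finLs])
      fix xs ys :: "'a list"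
      assume lx: "length xs = ?n" and ly: "length ys = ?n" and sx: "set xs \<subseteq> univ K" and sy: "set ys \<subseteq> univ K"
        and at: "\<forall>a\<in>atomsf ar Ls ?n. sat Ks a (\<lambda>i. xs ! i) = sat Ks a (\<lambda>i. ys ! i)"
      have xT: "xs \<in> T" and yT: "ys \<in> T" using lx ly sx sy NLp[OF R0] by (auto simp: T_def)
      have atm: "rel Ks R (map ((!) xs) is) \<longleftrightarrow> rel Ks R (map ((!) ys) is)"
        if "R \<in> Ls" "length is = ar R" "set is \<subseteq> {..<?n}" for R "is"
        using at atom_in_atomsf[where ar=ar and n="ar R0", OF that] by auto
      have eqs: "xs ! i = xs ! j \<longleftrightarrow> ys ! i = ys ! j" if "i < ?n" "j < ?n" for i j
        using at eq_in_atomsf[where ar=ar and Lx=Ls, OF that] by auto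
      have e: "ltp xs = ltp ys"
      proof (rule ltp_eqI)
        show "length xs = length ys" using lx ly by simp
        show "xs ! i = xs ! j \<longleftrightarrow> ys ! i = ys ! j" if "i < length xs" "j < length xs" for i j
          using eqs that lx by simp
        show "rel K R (map ((!) xs) is) \<longleftrightarrow> rel K R (map ((!) ys) is)"
          if "R \<in> L" "length is = ar R" "set is \<subseteq> {..<length xs}" for R "is"
          using atm[of R "is"] that lx LLs relKs by auto
      qed
      have lhs: "\<forall>R\<in>Ls. \<forall>is. length is = ar R \<and> set is \<subseteq> {..<length xs} \<longrightarrow>
            (rel Ks R (map \<eta> (map ((!) xs) is)) \<longleftrightarrow> rel Ks R (map \<eta> (map ((!) ys) is)))"
      proof (intro ballI allI impI)
        fix R "is" assume R: "R \<in> Ls" and i: "length is = ar R \<and> set is \<subseteq> {..<length xs}"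
        have s1: "set (map ((!) xs) is) \<subseteq> univ K" by (rule set_map_nth_sub) (use i sx in auto)
        have s2: "set (map ((!) ys) is) \<subseteq> univ K" by (rule set_map_nth_sub) (use i sy lx ly in auto)
        show "rel Ks R (map \<eta> (map ((!) xs) is)) \<longleftrightarrow> rel Ks R (map \<eta> (map ((!) ys) is))"
          using etarec[OF R _ s1] etarec[OF R _ s2] atm[OF R] i lx by simp
      qed
      then have rhs: "\<forall>R\<in>Lp. \<forall>is. length is = ar R \<and> set is \<subseteq> {..<length xs} \<longrightarrow>
            (rel Kp R (map \<eta> (map ((!) xs) is)) \<longleftrightarrow> rel Kp R (map \<eta> (map ((!) ys) is)))"
        using core[OF xT yT e] by blast
      have "rel Kp R0 (map \<eta> (map ((!) xs) [0..<?n])) \<longleftrightarrow> rel Kp R0 (map \<eta> (map ((!) ys) [0..<?n]))"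
        using bspec[OF rhs R0, rule_format, of "[0..<?n]"] lx by (auto simp: atLeast0LessThan)
      moreover have "map ((!) xs) [0..<?n] = xs" "map ((!) ys) [0..<?n] = ys"
        using lx ly by (auto intro: nth_equalityI)
      ultimately have "rel Kp R0 (map \<eta> xs) \<longleftrightarrow> rel Kp R0 (map \<eta> ys)" by simp
      then show "rel (pull ar Lp Kp \<eta>) R0 xs = rel (pull ar Lp Kp \<eta>) R0 ys"
        using R0 lx ly sx sy uKp by (simp add: pull_def)
    qed
    then show "\<exists>\<phi>. wf_qf ar Ls (ar R0) \<phi> \<and> (\<forall>xs. length xs = ar R0 \<and> set xs \<subseteq> univ (pull ar Lp Kp \<eta>) \<longrightarrow>
            rel (pull ar Lp Kp \<eta>) R0 xs = sat Ks \<phi> (\<lambda>i. xs ! i))"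
      using uKpK by simp
  qed
  have q2: "qf_interprets ar Lp (pull ar Lp Kp \<eta>) Ls Ks"
    unfolding qf_interprets_def
  proof
    fix R0 assume R0: "R0 \<in> Ls"
    let ?n = "ar R0"
    have "\<exists>\<phi>. wf_qf ar Lp ?n \<phi> \<and> (\<forall>xs. length xs = ?n \<and> set xs \<subseteq> univ K \<longrightarrow>
            (rel Ks R0 xs \<longleftrightarrow> sat (pull ar Lp Kp \<eta>) \<phi> (\<lambda>i. xs ! i)))"
    proof (rule definable[OF finLp])
      fix xs ys :: "'a list"
      assume lx: "length xs = ?n" and ly: "length ys = ?n" and sx: "set xs \<subseteq> univ K" and sy: "set ys \<subseteq> univ K"
        and at: "\<forall>a\<in>atomsf ar Lp ?n. sat (pull ar Lp Kp \<eta>) a (\<lambda>i. xs ! i) = sat (pull ar Lp Kp \<eta>) a (\<lambda>i. ys ! i)"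
      have xT: "xs \<in> T" and yT: "ys \<in> T" using lx ly sx sy NLs[OF R0] by (auto simp: T_def)
      have atm: "rel Kp R (map \<eta> (map ((!) xs) is)) \<longleftrightarrow> rel Kp R (map \<eta> (map ((!) ys) is))"
        if "R \<in> Lp" "length is = ar R" "set is \<subseteq> {..<?n}" for R "is"
      proof -
        have s1: "set (map ((!) xs) is) \<subseteq> univ K" by (rule set_map_nth_sub) (use that sx lx in auto)
        have s2: "set (map ((!) ys) is) \<subseteq> univ K" by (rule set_map_nth_sub) (use that sy ly in auto)
        show ?thesis using at atom_in_atomsf[where ar=ar and n="ar R0", OF that] that s1 s2 uKp by (auto simp: pull_def)
      qed
      have eqs: "xs ! i = xs ! j \<longleftrightarrow> ys ! i = ys ! j" if "i < ?n" "j < ?n" for i j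
        using at eq_in_atomsf[where ar=ar and Lx=Lp, OF that] by auto
      have e: "ltp xs = ltp ys"
      proof (rule ltp_eqI)
        show "length xs = length ys" using lx ly by simp
        show "xs ! i = xs ! j \<longleftrightarrow> ys ! i = ys ! j" if "i < length xs" "j < length xs" for i j
          using eqs that lx by simp
        show "rel K R (map ((!) xs) is) \<longleftrightarrow> rel K R (map ((!) ys) is)"
          if R: "R \<in> L" and i: "length is = ar R" "set is \<subseteq> {..<length xs}" for R "is"
        proof -
          have s1: "set (map ((!) xs) is) \<subseteq> univ K" by (rule set_map_nth_sub) (use i sx in auto)
          have s2: "set (map ((!) ys) is) \<subseteq> univ K" by (rule set_map_nth_sub) (use i sy lx ly in auto)
          have "rel K R (map ((!) xs) is) \<longleftrightarrow> rel K R (map \<eta> (map ((!) xs) is))"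
            using emb_D(4)[OF eta R _ s1] i by simp
          also have "\<dots> \<longleftrightarrow> rel Kp R (map \<eta> (map ((!) xs) is))" using relKp R by simp
          also have "\<dots> \<longleftrightarrow> rel Kp R (map \<eta> (map ((!) ys) is))" using atm[of R "is"] R LLp i lx by auto
          also have "\<dots> \<longleftrightarrow> rel K R (map \<eta> (map ((!) ys) is))" using relKp R by simp
          also have "\<dots> \<longleftrightarrow> rel K R (map ((!) ys) is)"
            using emb_D(4)[OF eta R _ s2] i by simp
          finally show ?thesis .
        qed
      qed
      have rhs: "\<forall>R\<in>Lp. \<forall>is. length is = ar R \<and> set is \<subseteq> {..<length xs} \<longrightarrow>
            (rel Kp R (map \<eta> (map ((!) xs) is)) \<longleftrightarrow> rel Kp R (map \<eta> (map ((!) ys) is)))"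
        using atm lx by auto
      then have lhs: "\<forall>R\<in>Ls. \<forall>is. length is = ar R \<and> set is \<subseteq> {..<length xs} \<longrightarrow>
            (rel Ks R (map \<eta> (map ((!) xs) is)) \<longleftrightarrow> rel Ks R (map \<eta> (map ((!) ys) is)))"
        using core[OF xT yT e] by blast
      have "rel Ks R0 (map \<eta> (map ((!) xs) [0..<?n])) \<longleftrightarrow> rel Ks R0 (map \<eta> (map ((!) ys) [0..<?n]))"
        using bspec[OF lhs R0, rule_format, of "[0..<?n]"] lx by (auto simp: atLeast0LessThan)
      moreover have "map ((!) xs) [0..<?n] = xs" "map ((!) ys) [0..<?n] = ys"
        using lx ly by (auto intro: nth_equalityI)
      ultimately have "rel Ks R0 (map \<eta> xs) \<longleftrightarrow> rel Ks R0 (map \<eta> ys)" by simp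
      then show "rel Ks R0 xs = rel Ks R0 ys"
        using etarec[OF R0 lx sx] etarec[OF R0 ly sy] by simp
    qed
    then show "\<exists>\<phi>. wf_qf ar Lp (ar R0) \<phi> \<and> (\<forall>xs. length xs = ar R0 \<and> set xs \<subseteq> univ Ks \<longrightarrow>
            rel Ks R0 xs = sat (pull ar Lp Kp \<eta>) \<phi> (\<lambda>i. xs ! i))"
      using uKs by simp
  qed
  have "bi_interpretable ar Ls Ks Lp (pull ar Lp Kp \<eta>)"
    unfolding bi_interpretable_def using q1 q2 uKs uKpK by simp
  then show ?thesis using eta by blast
qed

end

theorem corollary2p7:
  fixes ar :: "'r \<Rightarrow> nat"
    and L Ls Lp :: "'r set"
    and C :: "('r, 'a) struc set"
    and K Ks Kp :: "('r, 'a) struc"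
  assumes "finite L" "finite Ls" "finite Lp"
    and "fraisse_class ar L C"
    and "is_flim ar L C K"
    and "finite_BRDs ar L C K"
    and "big_ramsey_structure ar L Ls C K Ks" "recurrent ar L Ls K Ks"
    and "big_ramsey_structure ar L Lp C K Kp" "recurrent ar L Lp K Kp"
  shows "(\<exists>\<eta>\<in>emb ar L K K. bi_interpretable ar Ls Ks Lp (pull ar Lp Kp \<eta>)) \<and>
         (\<exists>\<theta>\<in>emb ar L K K. bi_interpretable ar Lp Kp Ls (pull ar Ls Ks \<theta>))"
proof -
  interpret s1: setting ar L Ls Lp C K Ks Kp
    by (unfold_locales) (use assms in auto)
  interpret s2: setting ar L Lp Ls C K Kp Ks
    by (unfold_locales) (use assms in auto)
  show ?thesis using s1.dir[OF assms(8)] s2.dir[OF assms(10)] by blast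
qed


end
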